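(* Let $k\ge 3$ and $n_1,\dots,n_k\ge 2$. The LC orbit of the complete $k$-partite graph $K_{n_1,\dots,n_k}$ has size $$|\mathcal{O}(K_{n_1,\dots,n_k})|=\sum_{\substack{I\subseteq[k]\\ |I|\text{ even}}}\prod_{i\in I}n_i+\sum_{j=1}^k\prod_{i\in[k]\setminus\{j\}}(n_i+1),$$ where $[k]=\{1,\dots,k\}$ and the empty product equals $1$ (equivalently, the first sum consists of the terms of the full expansion of $\prod_{i=1}^k(n_i+1)$ that are products of an even number of the $n_i$).
   Context: $K_{n_1,\dots,n_k}$ has vertex set $U_1\sqcup\cdots\sqcup U_k$ with $|U_i|=n_i$ and edges exactly between vertices in different parts. The local complement $c_v(G)$ complements the edges among the neighbours of $v$. $\mathcal{O}(G)$ is the set of all graphs on the labelled vertex set $V(G)$ obtainable from $G$ by finite sequences of local complements (labelled graphs are counted). *)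

theory Defs
  imports Main
begin

text \<open>Simple graphs on a fixed labelled vertex set V are represented by their edge set,
  a set of 2-element subsets of V.\<close>

definition nbhd :: "'a set set \<Rightarrow> 'a \<Rightarrow> 'a set" where
  "nbhd E v = {u. {u, v} \<in> E}"

definition local_complement :: "'a set set \<Rightarrow> 'a \<Rightarrow> 'a set set" where
  "local_complement E v =
     E - {{x, y} | x y. x \<in> nbhd E v \<and> y \<in> nbhd E v \<and> x \<noteq> y}
     \<union> ({{x, y} | x y. x \<in> nbhd E v \<and> y \<in> nbhd E v \<and> x \<noteq> y} - E)"

inductive_set lc_orbit :: "'a set \<Rightarrow> 'a set set \<Rightarrow> 'a set set set"
  for V :: "'a set" and E :: "'a set set" where
  base: "E \<in> lc_orbit V E"
| step: "F \<in> lc_orbit V E \<Longrightarrow> v \<in> V \<Longrightarrow> local_complement F v \<in> lc_orbit V E"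

definition mp_vertices :: "nat \<Rightarrow> (nat \<Rightarrow> nat) \<Rightarrow> (nat \<times> nat) set" where
  "mp_vertices k n = {(i, a). i < k \<and> a < n i}"

definition complete_multipartite :: "nat \<Rightarrow> (nat \<Rightarrow> nat) \<Rightarrow> (nat \<times> nat) set set" where
  "complete_multipartite k n =
     {{x, y} | x y. x \<in> mp_vertices k n \<and> y \<in> mp_vertices k n \<and> fst x \<noteq> fst y}"

end

theory Submission
  imports Defs "HOL-Library.FuncSet"
begin

definition mkG :: "'a set \<Rightarrow> ('a \<Rightarrow> 'a \<Rightarrow> bool) \<Rightarrow> 'a set set" where
  "mkG V A = {{x, y} | x y. x \<in> V \<and> y \<in> V \<and> x \<noteq> y \<and> A x y}"

definition symr :: "('a \<Rightarrow> 'a \<Rightarrow> bool) \<Rightarrow> bool" where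
  "symr A = (\<forall>x y. A x y = A y x)"

lemma mem_mkG:
  assumes "symr A"
  shows "{x, y} \<in> mkG V A \<longleftrightarrow> x \<in> V \<and> y \<in> V \<and> x \<noteq> y \<and> A x y"
  using assms unfolding mkG_def symr_def by (auto simp: doubleton_eq_iff)

lemma mkG_elem: "e \<in> mkG V A \<Longrightarrow> \<exists>x y. e = {x, y} \<and> x \<noteq> y"
  unfolding mkG_def by auto

lemma nbhd_mkG:
  assumes "symr A"
  shows "nbhd (mkG V A) v = {u. u \<in> V \<and> v \<in> V \<and> u \<noteq> v \<and> A u v}"
  using mem_mkG[OF assms] unfolding nbhd_def by auto

lemma lc_mkG:
  assumes "symr A"
  shows "local_complement (mkG V A) v =
     mkG V (\<lambda>x y. A x y \<noteq> (v \<in> V \<and> x \<noteq> v \<and> y \<noteq> v \<and> A x v \<and> A y v))"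
    (is "?L = mkG V ?B")
proof -
  have sB: "symr ?B" using assms unfolding symr_def by metis
  define N where "N = nbhd (mkG V A) v"
  have N: "N = {u. u \<in> V \<and> v \<in> V \<and> u \<noteq> v \<and> A u v}" unfolding N_def by (rule nbhd_mkG[OF assms])
  define Q where "Q = {{x, y} | x y. x \<in> N \<and> y \<in> N \<and> x \<noteq> y}"
  have L: "?L = mkG V A - Q \<union> (Q - mkG V A)"
    unfolding local_complement_def Q_def N_def by simp
  have Qm: "{x,y} \<in> Q \<longleftrightarrow> x \<in> N \<and> y \<in> N \<and> x \<noteq> y" for x y
    unfolding Q_def by (auto simp: doubleton_eq_iff)
  have Qe: "e \<in> Q \<Longrightarrow> \<exists>x y. e = {x, y} \<and> x \<noteq> y" for e unfolding Q_def by auto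
  show ?thesis
  proof (rule set_eqI)
    fix e
    show "e \<in> ?L \<longleftrightarrow> e \<in> mkG V ?B"
    proof
      assume "e \<in> ?L"
      then obtain x y where e: "e = {x,y}" "x \<noteq> y" using L mkG_elem Qe by blast
      show "e \<in> mkG V ?B" using \<open>e \<in> ?L\<close> unfolding L e(1) mem_mkG[OF sB] mem_mkG[OF assms] Un_iff Diff_iff Qm N
        using e(2) by auto
    next
      assume "e \<in> mkG V ?B"
      then obtain x y where e: "e = {x,y}" "x \<noteq> y" using mkG_elem by blast
      show "e \<in> ?L" using \<open>e \<in> mkG V ?B\<close> unfolding L e(1) mem_mkG[OF sB] mem_mkG[OF assms] Un_iff Diff_iff Qm N
        using e(2) by auto
    qed
  qed
qed

lemma mkG_cong:
  assumes "\<And>x y. x \<in> V \<Longrightarrow> y \<in> V \<Longrightarrow> x \<noteq> y \<Longrightarrow> A x y = B x y"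
  shows "mkG V A = mkG V B"
  using assms unfolding mkG_def by blast

lemma mkG_eqD:
  assumes "mkG V A = mkG V B" "symr A" "symr B" "x \<in> V" "y \<in> V" "x \<noteq> y"
  shows "A x y = B x y"
  using assms mem_mkG[where A=A and V=V and x=x and y=y] mem_mkG[where A=B and V=V and x=x and y=y] by auto

definition core :: "nat option \<Rightarrow> nat \<Rightarrow> nat \<Rightarrow> bool" where
  "core t i j = (case t of None \<Rightarrow> True | Some j0 \<Rightarrow> i = j0 \<or> j = j0)"

definition par :: "nat set \<Rightarrow> bool" where "par I = odd (card I)"

definition hfl :: "nat option \<Rightarrow> nat set \<Rightarrow> nat \<Rightarrow> bool" where
  "hfl t I i = (case t of None \<Rightarrow> False | Some j \<Rightarrow> (i = j \<longrightarrow> par I))"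

definition rep :: "nat set \<Rightarrow> (nat \<Rightarrow> nat) \<Rightarrow> nat \<times> nat \<Rightarrow> bool" where
  "rep I c x = (fst x \<in> I \<longrightarrow> snd x = c (fst x))"

definition adjP :: "nat option \<Rightarrow> nat set \<Rightarrow> (nat \<Rightarrow> nat) \<Rightarrow> nat \<times> nat \<Rightarrow> nat \<times> nat \<Rightarrow> bool" where
  "adjP t I c x y = (if fst x = fst y then
      (if fst x \<in> I then (snd x = c (fst x) \<or> snd y = c (fst x)) else hfl t I (fst x))
    else core t (fst x) (fst y) \<and> rep I c x \<and> rep I c y)"

definition GP :: "nat \<Rightarrow> (nat \<Rightarrow> nat) \<Rightarrow> nat option \<Rightarrow> nat set \<Rightarrow> (nat \<Rightarrow> nat) \<Rightarrow> (nat \<times> nat) set set" where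
  "GP k n t I c = mkG (mp_vertices k n) (adjP t I c)"

lemma symr_adjP: "symr (adjP t I c)"
  unfolding symr_def adjP_def core_def by (auto split: option.splits)

lemma lc_GP:
  assumes "v \<in> mp_vertices k n"
    and "\<And>x y. x \<noteq> y \<Longrightarrow> (adjP t I c x y \<noteq> (x \<noteq> v \<and> y \<noteq> v \<and> adjP t I c x v \<and> adjP t I c y v))
           = adjP t' I' c' x y"
  shows "local_complement (GP k n t I c) v = GP k n t' I' c'"
  unfolding GP_def lc_mkG[OF symr_adjP] using assms by (intro mkG_cong) auto


lemma T1:
  assumes "i \<in> I" "par (I - {i})"
  shows "(i1,a1) \<noteq> (i2,a2) \<Longrightarrow> (adjP None I c (i1,a1) (i2,a2) \<noteq> ((i1,a1) \<noteq> (i, c i) \<and> (i2,a2) \<noteq> (i, c i) \<and> adjP None I c (i1,a1) (i, c i) \<and> adjP None I c (i2,a2) (i, c i)))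
           = adjP (Some i) (I - {i}) c (i1,a1) (i2,a2)"
  using assms unfolding adjP_def core_def hfl_def rep_def if_bool_eq_disj option.case fst_conv snd_conv Diff_iff singleton_iff prod.inject insert_iff empty_iff fun_upd_apply
  by smt

lemma leaf_adj:
  assumes "i \<in> I" "a \<noteq> c i" "adjP t I c x (i, a)"
  shows "x = (i, c i)"
  using assms unfolding adjP_def rep_def by (cases x) (auto split: if_splits)

lemma T2:
  assumes "i \<in> I" "a \<noteq> c i"
  shows "(i1,a1) \<noteq> (i2,a2) \<Longrightarrow> (adjP t I c (i1,a1) (i2,a2) \<noteq> ((i1,a1) \<noteq> (i, a) \<and> (i2,a2) \<noteq> (i, a) \<and> adjP t I c (i1,a1) (i, a) \<and> adjP t I c (i2,a2) (i, a)))
           = adjP t I c (i1,a1) (i2,a2)"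
  using leaf_adj[where x="(i1,a1)" and i=i and I=I and a=a and c=c and t=t, OF assms] leaf_adj[where x="(i2,a2)" and i=i and I=I and a=a and c=c and t=t, OF assms] by auto

lemma T3:
  assumes "i \<notin> I" "\<not> par I"
  shows "(i1,a1) \<noteq> (i2,a2) \<Longrightarrow> (adjP None I c (i1,a1) (i2,a2) \<noteq> ((i1,a1) \<noteq> (i, a) \<and> (i2,a2) \<noteq> (i, a) \<and> adjP None I c (i1,a1) (i, a) \<and> adjP None I c (i2,a2) (i, a)))
           = adjP (Some i) I c (i1,a1) (i2,a2)"
  using assms unfolding adjP_def core_def hfl_def rep_def if_bool_eq_disj option.case fst_conv snd_conv Diff_iff singleton_iff prod.inject insert_iff empty_iff fun_upd_apply
  by smt

lemma T4:
  assumes "j \<notin> I" "\<not> par I"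
  shows "(i1,a1) \<noteq> (i2,a2) \<Longrightarrow> (adjP (Some j) I c (i1,a1) (i2,a2) \<noteq> ((i1,a1) \<noteq> (j, a) \<and> (i2,a2) \<noteq> (j, a) \<and> adjP (Some j) I c (i1,a1) (j, a) \<and> adjP (Some j) I c (i2,a2) (j, a)))
           = adjP None I c (i1,a1) (i2,a2)"
  using assms unfolding adjP_def core_def hfl_def rep_def if_bool_eq_disj option.case fst_conv snd_conv Diff_iff singleton_iff prod.inject insert_iff empty_iff fun_upd_apply
  by smt

lemma T5:
  assumes "j \<notin> I" "par I"
  shows "(i1,a1) \<noteq> (i2,a2) \<Longrightarrow> (adjP (Some j) I c (i1,a1) (i2,a2) \<noteq> ((i1,a1) \<noteq> (j, a) \<and> (i2,a2) \<noteq> (j, a) \<and> adjP (Some j) I c (i1,a1) (j, a) \<and> adjP (Some j) I c (i2,a2) (j, a)))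
           = adjP None (insert j I) (c(j := a)) (i1,a1) (i2,a2)"
  using assms unfolding adjP_def core_def hfl_def rep_def if_bool_eq_disj option.case fst_conv snd_conv Diff_iff singleton_iff prod.inject insert_iff empty_iff fun_upd_apply
  by smt

lemma T6:
  assumes "i \<in> I" "i \<noteq> j" "j \<notin> I" "par (I - {i}) \<longleftrightarrow> \<not> par I"
  shows "(i1,a1) \<noteq> (i2,a2) \<Longrightarrow> (adjP (Some j) I c (i1,a1) (i2,a2) \<noteq> ((i1,a1) \<noteq> (i, c i) \<and> (i2,a2) \<noteq> (i, c i) \<and> adjP (Some j) I c (i1,a1) (i, c i) \<and> adjP (Some j) I c (i2,a2) (i, c i)))
           = adjP (Some j) (I - {i}) c (i1,a1) (i2,a2)"
  using assms unfolding adjP_def core_def hfl_def rep_def if_bool_eq_disj option.case fst_conv snd_conv Diff_iff singleton_iff prod.inject insert_iff empty_iff fun_upd_apply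
  by smt

lemma T8:
  assumes "i \<notin> I" "i \<noteq> j" "j \<notin> I" "par (insert i I) \<longleftrightarrow> \<not> par I"
  shows "(i1,a1) \<noteq> (i2,a2) \<Longrightarrow> (adjP (Some j) I c (i1,a1) (i2,a2) \<noteq> ((i1,a1) \<noteq> (i, a) \<and> (i2,a2) \<noteq> (i, a) \<and> adjP (Some j) I c (i1,a1) (i, a) \<and> adjP (Some j) I c (i2,a2) (i, a)))
           = adjP (Some j) (insert i I) (c(i := a)) (i1,a1) (i2,a2)"
  using assms unfolding adjP_def core_def hfl_def rep_def if_bool_eq_disj option.case fst_conv snd_conv Diff_iff singleton_iff prod.inject insert_iff empty_iff fun_upd_apply
  by smt



lemma lc_GP':
  assumes "v \<in> mp_vertices k n"
    and "\<And>i1 a1 i2 a2. (i1,a1) \<noteq> (i2,a2) \<Longrightarrow> (adjP t I c (i1,a1) (i2,a2) \<noteq> ((i1,a1) \<noteq> v \<and> (i2,a2) \<noteq> v \<and> adjP t I c (i1,a1) v \<and> adjP t I c (i2,a2) v))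
           = adjP t' I' c' (i1,a1) (i2,a2)"
  shows "local_complement (GP k n t I c) v = GP k n t' I' c'"
proof (rule lc_GP[OF assms(1)])
  fix x y :: "nat \<times> nat" assume "x \<noteq> y"
  then show "(adjP t I c x y \<noteq> (x \<noteq> v \<and> y \<noteq> v \<and> adjP t I c x v \<and> adjP t I c y v)) = adjP t' I' c' x y"
    using assms(2)[of "fst x" "snd x" "fst y" "snd y"] by simp
qed

lemma GP_cong:
  assumes "\<And>i. i \<in> I \<Longrightarrow> c i = c' i"
  shows "GP k n t I c = GP k n t I c'"
proof -
  have "adjP t I c = adjP t I c'"
    unfolding adjP_def rep_def using assms by (intro ext) (simp cong: imp_cong)
  then show ?thesis by (simp add: GP_def)
qed

definition valid :: "nat \<Rightarrow> (nat \<Rightarrow> nat) \<Rightarrow> nat option \<Rightarrow> nat set \<Rightarrow> (nat \<Rightarrow> nat) \<Rightarrow> bool" where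
  "valid k n t I c = (I \<subseteq> {0..<k} \<and> (\<forall>i\<in>I. c i < n i) \<and>
     (case t of None \<Rightarrow> even (card I) | Some j \<Rightarrow> j < k \<and> j \<notin> I))"

lemma V_iff: "(i, a) \<in> mp_vertices k n \<longleftrightarrow> i < k \<and> a < n i"
  by (simp add: mp_vertices_def)

lemma finI: "valid k n t I c \<Longrightarrow> finite I"
  unfolding valid_def by (meson finite_atLeastLessThan finite_subset)

lemma card_remove_parity:
  assumes "finite I" "i \<in> I" shows "odd (card (I - {i})) \<longleftrightarrow> even (card I)"
proof -
  have "card I = Suc (card (I - {i}))" using card_Suc_Diff1[OF assms] by simp
  then show ?thesis by simp
qed

lemma card_insert_parity:
  assumes "finite I" "i \<notin> I" shows "odd (card (insert i I)) \<longleftrightarrow> even (card I)"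
  using assms by simp

lemma closed:
  assumes val: "valid k n t I c" and v: "v \<in> mp_vertices k n"
  shows "\<exists>t' I' c'. valid k n t' I' c' \<and> local_complement (GP k n t I c) v = GP k n t' I' c'"
proof -
  obtain i a where va: "v = (i, a)" by force
  have ia: "i < k" "a < n i" using v va V_iff by auto
  have fin: "finite I" using finI[OF val] .
  have Ik: "I \<subseteq> {0..<k}" and cI: "\<forall>i\<in>I. c i < n i" using val by (auto simp: valid_def)
  show ?thesis
  proof (cases t)
    case None
    then have ev: "even (card I)" using val by (simp add: valid_def)
    show ?thesis
    proof (cases "i \<in> I")
      case True
      show ?thesis
      proof (cases "a = c i")
        case True
        have "local_complement (GP k n t I c) v = GP k n (Some i) (I - {i}) c"
          unfolding None va True
          by (rule lc_GP'[OF v[unfolded va True]], rule T1) (use \<open>i \<in> I\<close> card_remove_parity[OF fin \<open>i \<in> I\<close>] ev in \<open>auto simp: par_def\<close>)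
        moreover have "valid k n (Some i) (I - {i}) c" using val ia unfolding valid_def by auto
        ultimately show ?thesis by blast
      next
        case False
        have "local_complement (GP k n t I c) v = GP k n t I c"
          unfolding va
          by (rule lc_GP'[OF v[unfolded va]], rule T2) (use \<open>i \<in> I\<close> False in auto)
        then show ?thesis using val by blast
      qed
    next
      case False
      have "local_complement (GP k n t I c) v = GP k n (Some i) I c"
        unfolding None va
        by (rule lc_GP'[OF v[unfolded va]], rule T3) (use False ev in \<open>auto simp: par_def\<close>)
      moreover have "valid k n (Some i) I c" using val ia False unfolding valid_def by auto
      ultimately show ?thesis by blast
    qed
  next
    case (Some j)
    then have j: "j < k" "j \<notin> I" using val by (auto simp: valid_def)
    show ?thesis
    proof (cases "i = j")
      case True
      show ?thesis
      proof (cases "even (card I)")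
        case True
        have "local_complement (GP k n t I c) v = GP k n None I c"
          unfolding Some va \<open>i = j\<close>
          by (rule lc_GP'[OF v[unfolded va \<open>i = j\<close>]], rule T4) (use True j in \<open>auto simp: par_def\<close>)
        moreover have "valid k n None I c" using val True unfolding valid_def by auto
        ultimately show ?thesis by blast
      next
        case False
        have "local_complement (GP k n t I c) v = GP k n None (insert j I) (c(j := a))"
          unfolding Some va \<open>i = j\<close>
          by (rule lc_GP'[OF v[unfolded va \<open>i = j\<close>]], rule T5) (use False j in \<open>auto simp: par_def\<close>)
        moreover have "valid k n None (insert j I) (c(j := a))"
          using val False j ia \<open>i = j\<close> fin unfolding valid_def by auto
        ultimately show ?thesis by blast
      qed
    next
      case False
      show ?thesis
      proof (cases "i \<in> I")
        case iI: True
        show ?thesis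
        proof (cases "a = c i")
          case True
          have "local_complement (GP k n t I c) v = GP k n (Some j) (I - {i}) c"
            unfolding Some va True
            by (rule lc_GP'[OF v[unfolded va True]], rule T6) (use iI False j card_remove_parity[OF fin iI] in \<open>auto simp: par_def\<close>)
          moreover have "valid k n (Some j) (I - {i}) c" using val j unfolding valid_def by auto
          ultimately show ?thesis by blast
        next
          case False
          have "local_complement (GP k n t I c) v = GP k n t I c"
            unfolding va
            by (rule lc_GP'[OF v[unfolded va]], rule T2) (use iI False in auto)
          then show ?thesis using val by blast
        qed
      next
        case iI: False
        have "local_complement (GP k n t I c) v = GP k n (Some j) (insert i I) (c(i := a))"
          unfolding Some va
          by (rule lc_GP'[OF v[unfolded va]], rule T8) (use iI False j card_insert_parity[OF fin iI] in \<open>auto simp: par_def\<close>)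
        moreover have "valid k n (Some j) (insert i I) (c(i := a))"
          using val j ia iI False unfolding valid_def by auto
        ultimately show ?thesis by blast
      qed
    qed
  qed
qed



lemma K_eq: "complete_multipartite k n = GP k n None {} c"
proof -
  have "complete_multipartite k n = mkG (mp_vertices k n) (\<lambda>x y. fst x \<noteq> fst y)"
    unfolding complete_multipartite_def mkG_def by auto
  also have "\<dots> = GP k n None {} c"
    unfolding GP_def by (rule mkG_cong) (auto simp: adjP_def hfl_def core_def rep_def)
  finally show ?thesis .
qed

lemma orbit_step:
  assumes "G \<in> lc_orbit V E" "v \<in> V" "local_complement G v = G'"
  shows "G' \<in> lc_orbit V E"
  using lc_orbit.step[OF assms(1,2)] assms(3) by simp

abbreviation orb :: "nat \<Rightarrow> (nat \<Rightarrow> nat) \<Rightarrow> (nat \<times> nat) set set set" where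
  "orb k n \<equiv> lc_orbit (mp_vertices k n) (complete_multipartite k n)"

lemma reachK:
  assumes npos: "\<And>i. i < k \<Longrightarrow> n i \<ge> 2"
  shows "card I = m \<Longrightarrow> I \<subseteq> {0..<k} \<Longrightarrow> even m \<Longrightarrow> (\<forall>i\<in>I. c i < n i)
    \<Longrightarrow> GP k n None I c \<in> orb k n"
proof (induction m arbitrary: I c rule: less_induct)
  case (less m)
  have fin: "finite I" using less.prems(2) finite_subset by blast
  show ?case
  proof (cases "m = 0")
    case True
    then have "I = {}" using less.prems(1) fin by simp
    then show ?thesis using K_eq[of k n c] lc_orbit.base by metis
  next
    case False
    then obtain a where a: "a \<in> I" using less.prems(1) by fastforce
    have "card (I - {a}) = m - 1" using less.prems(1) a fin by simp
    moreover have "m \<ge> 2" using False less.prems(3) by presburger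
    ultimately have "card (I - {a}) \<noteq> 0" by simp
    then have "I - {a} \<noteq> {}" by (metis card.empty)
    then obtain b where b: "b \<in> I" "b \<noteq> a" by blast
    define J where "J = I - {a, b}"
    have finJ: "finite J" using fin J_def by simp
    have cJ: "card J = m - 2" using less.prems(1) a b fin unfolding J_def
      by (simp add: card_Diff_subset)
    have IJ: "I = insert a (insert b J)" using a b unfolding J_def by auto
    have aJ: "a \<notin> J" "b \<notin> J" unfolding J_def by auto
    have evJ: "even (card J)" using cJ \<open>m \<ge> 2\<close> less.prems(3) by auto
    have ak: "a < k" "b < k" using a b less.prems(2) by auto
    have ca: "c a < n a" "c b < n b" using a b less.prems(4) by auto
    have s0: "GP k n None J c \<in> orb k n"
      using less.IH[of "m - 2" J c] \<open>m \<ge> 2\<close> cJ evJ less.prems(2,4) unfolding J_def by auto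
    have s1: "GP k n (Some a) J c \<in> orb k n"
      by (rule orbit_step[OF s0, of "(a, c a)"]) (use ak ca in \<open>simp add: V_iff\<close>,
          rule lc_GP', use ak ca in \<open>simp add: V_iff\<close>, rule T3, use aJ evJ in \<open>auto simp: par_def\<close>)
    have s2: "GP k n (Some a) (insert b J) c \<in> orb k n"
    proof (rule orbit_step[OF s1, of "(b, c b)"])
      show "(b, c b) \<in> mp_vertices k n" using ak ca by (simp add: V_iff)
      have "local_complement (GP k n (Some a) J c) (b, c b) = GP k n (Some a) (insert b J) (c(b := c b))"
        by (rule lc_GP', use ak ca in \<open>simp add: V_iff\<close>, rule T8) (use aJ b card_insert_parity[OF finJ aJ(2)] in \<open>auto simp: par_def\<close>)
      then show "local_complement (GP k n (Some a) J c) (b, c b) = GP k n (Some a) (insert b J) c" by simp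
    qed
    have s3: "GP k n None I c \<in> orb k n"
    proof (rule orbit_step[OF s2, of "(a, c a)"])
      show "(a, c a) \<in> mp_vertices k n" using ak ca by (simp add: V_iff)
      have "local_complement (GP k n (Some a) (insert b J) c) (a, c a) = GP k n None (insert a (insert b J)) (c(a := c a))"
        by (rule lc_GP', use ak ca in \<open>simp add: V_iff\<close>, rule T5) (use aJ b evJ finJ in \<open>auto simp: par_def\<close>)
      then show "local_complement (GP k n (Some a) (insert b J) c) (a, c a) = GP k n None I c" by (simp add: IJ)
    qed
    then show ?thesis .
  qed
qed

lemma reach:
  assumes npos: "\<And>i. i < k \<Longrightarrow> n i \<ge> 2" and val: "valid k n t I c"
  shows "GP k n t I c \<in> orb k n"
proof (cases t)
  case None
  then show ?thesis using reachK[OF npos, where I=I and m="card I" and c=c] val by (auto simp: valid_def)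
next
  case (Some j)
  have j: "j < k" "j \<notin> I" and Ik: "I \<subseteq> {0..<k}" and cI: "\<forall>i\<in>I. c i < n i"
    using val Some by (auto simp: valid_def)
  have fin: "finite I" using Ik finite_subset by blast
  have n0: "0 < n j" using npos[OF j(1)] by simp
  have v: "(j, 0) \<in> mp_vertices k n" using j n0 by (simp add: V_iff)
  show ?thesis
  proof (cases "even (card I)")
    case True
    have "GP k n None I c \<in> orb k n" using reachK[OF npos, where I=I and m="card I" and c=c] True Ik cI by auto
    then show ?thesis unfolding Some
      by (rule orbit_step[OF _ v]) (rule lc_GP'[OF v], rule T3, use j True in \<open>auto simp: par_def\<close>)
  next
    case False
    have r0: "GP k n None (insert j I) (c(j := 0)) \<in> orb k n"
      using reachK[OF npos, where I="insert j I" and m="card (insert j I)" and c="c(j := 0)"] False Ik cI j fin n0 by auto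
    have v': "(j, (c(j := 0)) j) \<in> mp_vertices k n" using v by simp
    have lc: "local_complement (GP k n None (insert j I) (c(j := 0))) (j, (c(j := 0)) j)
        = GP k n (Some j) (insert j I - {j}) (c(j := 0))"
      by (rule lc_GP'[OF v'], rule T1) (use j False fin in \<open>auto simp: par_def\<close>)
    have "GP k n (Some j) (insert j I - {j}) (c(j := 0)) \<in> orb k n"
      by (rule orbit_step[OF r0 v' lc])
    moreover have "GP k n (Some j) (insert j I - {j}) (c(j := 0)) = GP k n (Some j) I c"
    proof -
      have "insert j I - {j} = I" using j by auto
      moreover have "GP k n (Some j) I (c(j := 0)) = GP k n (Some j) I c"
        by (rule GP_cong) (use j in auto)
      ultimately show ?thesis by simp
    qed
    ultimately show ?thesis unfolding Some by simp
  qed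
qed



lemma orbit_sub:
  assumes "F \<in> orb k n"
  shows "\<exists>t I c. valid k n t I c \<and> F = GP k n t I c"
  using assms
proof (induction rule: lc_orbit.induct)
  case base
  have "valid k n None {} (\<lambda>_. 0)" by (simp add: valid_def)
  then show ?case using K_eq[of k n "\<lambda>_. 0"] by blast
next
  case (step F v)
  then obtain t I c where v: "valid k n t I c" and F: "F = GP k n t I c" by blast
  obtain t' I' c' where "valid k n t' I' c'" "local_complement (GP k n t I c) v = GP k n t' I' c'"
    using closed[OF v step.hyps(2)] by blast
  then show ?case unfolding F by blast
qed

definition PP :: "nat \<Rightarrow> (nat \<Rightarrow> nat) \<Rightarrow> (nat option \<times> nat set \<times> (nat \<Rightarrow> nat)) set" where
  "PP k n = {(t, I, c). valid k n t I c \<and> c \<in> extensional I}"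

lemma orbit_eq:
  assumes npos: "\<And>i. i < k \<Longrightarrow> n i \<ge> 2"
  shows "orb k n = (\<lambda>(t, I, c). GP k n t I c) ` PP k n"
proof
  show "orb k n \<subseteq> (\<lambda>(t, I, c). GP k n t I c) ` PP k n"
  proof
    fix F assume "F \<in> orb k n"
    then obtain t I c where v: "valid k n t I c" and F: "F = GP k n t I c" using orbit_sub by blast
    have "valid k n t I (restrict c I)" using v by (simp add: valid_def)
    moreover have "GP k n t I (restrict c I) = GP k n t I c" by (rule GP_cong) simp
    ultimately have "(t, I, restrict c I) \<in> PP k n" "F = (\<lambda>(t, I, c). GP k n t I c) (t, I, restrict c I)"
      using F by (auto simp: PP_def)
    then show "F \<in> (\<lambda>(t, I, c). GP k n t I c) ` PP k n" by blast
  qed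
next
  show "(\<lambda>(t, I, c). GP k n t I c) ` PP k n \<subseteq> orb k n"
    using reach[OF npos] by (auto simp: PP_def)
qed

definition rv :: "nat set \<Rightarrow> (nat \<Rightarrow> nat) \<Rightarrow> nat \<Rightarrow> nat \<times> nat" where
  "rv I c l = (l, if l \<in> I then c l else 0)"

lemma rv_V:
  assumes "valid k n t I c" "l < k" "n l \<ge> 2"
  shows "rv I c l \<in> mp_vertices k n"
  using assms by (auto simp: rv_def V_iff valid_def)

lemma rv_adj:
  assumes "l \<noteq> m"
  shows "adjP t I c (rv I c l) (rv I c m) = core t l m"
  using assms by (simp add: rv_def adjP_def rep_def)

lemma crossnb:
  assumes k3: "k \<ge> 3" and npos: "\<And>i. i < k \<Longrightarrow> n i \<ge> 2" and val: "valid k n t I c"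
    and ia: "i < k"
  shows "(\<exists>y\<in>mp_vertices k n. fst y \<noteq> i \<and> adjP t I c (i, a) y) \<longleftrightarrow> (i \<in> I \<longrightarrow> a = c i)"
proof
  assume "\<exists>y\<in>mp_vertices k n. fst y \<noteq> i \<and> adjP t I c (i, a) y"
  then show "i \<in> I \<longrightarrow> a = c i" by (auto simp: adjP_def rep_def)
next
  assume rep: "i \<in> I \<longrightarrow> a = c i"
  define l where "l = (case t of None \<Rightarrow> (if i = 0 then 1 else 0)
     | Some j \<Rightarrow> (if i = j then (if i = 0 then 1 else 0) else j))"
  have lk: "l < k" and li: "l \<noteq> i" and co: "core t i l"
    using val k3 ia unfolding l_def valid_def core_def by (auto split: option.splits)
  have "rv I c l \<in> mp_vertices k n" using rv_V[OF val lk npos[OF lk]] .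
  moreover have "adjP t I c (i, a) (rv I c l)"
    using li co rep by (simp add: rv_def adjP_def rep_def)
  moreover have "fst (rv I c l) \<noteq> i" using li by (simp add: rv_def)
  ultimately show "\<exists>y\<in>mp_vertices k n. fst y \<noteq> i \<and> adjP t I c (i, a) y" by blast
qed

lemma inj_param:
  assumes k3: "k \<ge> 3" and npos: "\<And>i. i < k \<Longrightarrow> n i \<ge> 2"
    and v1: "valid k n t I c" and v2: "valid k n t' I' c'"
    and e1: "c \<in> extensional I" and e2: "c' \<in> extensional I'"
    and eq: "GP k n t I c = GP k n t' I' c'"
  shows "t = t' \<and> I = I' \<and> c = c'"
proof -
  have E: "adjP t I c x y = adjP t' I' c' x y"
    if "x \<in> mp_vertices k n" "y \<in> mp_vertices k n" "x \<noteq> y" for x y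
    using mkG_eqD[OF eq[unfolded GP_def] symr_adjP symr_adjP that] .
  have P: "(i \<in> I \<longrightarrow> a = c i) \<longleftrightarrow> (i \<in> I' \<longrightarrow> a = c' i)" if "i < k" "a < n i" for i a
  proof -
    have x: "(i, a) \<in> mp_vertices k n" using that by (simp add: V_iff)
    have "(\<exists>y\<in>mp_vertices k n. fst y \<noteq> i \<and> adjP t I c (i, a) y)
        \<longleftrightarrow> (\<exists>y\<in>mp_vertices k n. fst y \<noteq> i \<and> adjP t' I' c' (i, a) y)"
      using E[OF x] by force
    then show ?thesis using crossnb[OF k3 npos v1 that(1)] crossnb[OF k3 npos v2 that(1)] by simp
  qed
  have Ik: "I \<subseteq> {0..<k}" "I' \<subseteq> {0..<k}" using v1 v2 by (auto simp: valid_def)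
  have II: "I = I'"
  proof (rule ccontr)
    assume "I \<noteq> I'"
    then obtain i where "i \<in> I \<and> i \<notin> I' \<or> i \<in> I' \<and> i \<notin> I" by blast
    then show False
    proof
      assume i: "i \<in> I \<and> i \<notin> I'"
      then have ik: "i < k" using Ik by auto
      define a where "a = (if c i = 0 then 1 else 0::nat)"
      have "a < n i" using npos[OF ik] by (simp add: a_def)
      from P[OF ik this] i show False by (simp add: a_def split: if_splits)
    next
      assume i: "i \<in> I' \<and> i \<notin> I"
      then have ik: "i < k" using Ik by auto
      define a where "a = (if c' i = 0 then 1 else 0::nat)"
      have "a < n i" using npos[OF ik] by (simp add: a_def)
      from P[OF ik this] i show False by (simp add: a_def split: if_splits)
    qed
  qed
  have cc: "c = c'"
  proof (rule extensionalityI[OF e1])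
    show "c' \<in> extensional I" using e2 II by simp
    fix i assume i: "i \<in> I"
    then have ik: "i < k" using Ik by auto
    have "c i < n i" using v1 i by (auto simp: valid_def)
    from P[OF ik this] i II show "c i = c' i" by simp
  qed
  have C: "core t l m = core t' l m" if "l < k" "m < k" "l \<noteq> m" for l m
  proof -
    have "adjP t I c (rv I c l) (rv I c m) = adjP t' I' c' (rv I c l) (rv I c m)"
      by (rule E) (use rv_V[OF v1] npos that in \<open>auto simp: rv_def\<close>)
    then show ?thesis using rv_adj[OF that(3), of t I c] rv_adj[OF that(3), of t' I c] II cc by simp
  qed
  have tt: "t = t'"
  proof (cases t)
    case None
    show ?thesis
    proof (cases t')
      case (Some j)
      define l where "l = (if j = 0 then 1 else 0::nat)"
      define m where "m = (if j = 2 then 1 else 2::nat)"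
      have "l < k" "m < k" "l \<noteq> m" using k3 by (auto simp: l_def m_def)
      from C[OF this] None Some show ?thesis by (auto simp: core_def l_def m_def split: if_splits)
    qed (use None in simp)
  next
    case (Some j)
    show ?thesis
    proof (cases t')
      case None
      define l where "l = (if j = 0 then 1 else 0::nat)"
      define m where "m = (if j = 2 then 1 else 2::nat)"
      have "l < k" "m < k" "l \<noteq> m" using k3 by (auto simp: l_def m_def)
      from C[OF this] None Some show ?thesis by (auto simp: core_def l_def m_def split: if_splits)
    next
      case (Some j')
      show ?thesis
      proof (rule ccontr)
        assume "t \<noteq> t'"
        then have jj: "j \<noteq> j'" using Some \<open>t = Some j\<close> by simp
        have jk: "j < k" using v1 \<open>t = Some j\<close> by (simp add: valid_def)
        define m where "m = (if j \<noteq> 0 \<and> j' \<noteq> 0 then 0 else if j \<noteq> 1 \<and> j' \<noteq> 1 then 1 else (2::nat))"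
        have m: "m < 3" "m \<noteq> j" "m \<noteq> j'" using jj unfolding m_def by auto
        have "m < k" using m k3 by simp
        from C[OF jk this] m jj Some \<open>t = Some j\<close> show False by (simp add: core_def)
      qed
    qed
  qed
  show ?thesis using tt II cc by simp
qed



lemma sum_pow_prod:
  fixes A :: "nat set" and n :: "nat \<Rightarrow> nat"
  assumes "finite A"
  shows "(\<Sum>I\<in>Pow A. \<Prod>i\<in>I. n i) = (\<Prod>i\<in>A. n i + 1)"
  using prod_add[OF assms, of n "\<lambda>_. 1"] by simp

lemma card_PP:
  "card (PP k n) = (\<Sum>I \<in> {I. I \<subseteq> {0..<k} \<and> even (card I)}. \<Prod>i\<in>I. n i)
     + (\<Sum>j<k. \<Prod>i \<in> {0..<k} - {j}. n i + 1)"
proof -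
  define AK where "AK = (SIGMA I:{I. I \<subseteq> {0..<k} \<and> even (card I)}. PiE I (\<lambda>i. {..<n i}))"
  define AS where "AS = (SIGMA j:{..<k}. SIGMA I:Pow ({0..<k} - {j}). PiE I (\<lambda>i. {..<n i}))"
  define fK where "fK = (\<lambda>(I, c). (None :: nat option, I :: nat set, c :: nat \<Rightarrow> nat))"
  define fS where "fS = (\<lambda>(j, I, c). (Some (j::nat), I :: nat set, c :: nat \<Rightarrow> nat))"
  have PPeq: "PP k n = fK ` AK \<union> fS ` AS"
  proof (rule set_eqI)
    fix p :: "nat option \<times> nat set \<times> (nat \<Rightarrow> nat)"
    obtain t I c where p: "p = (t, I, c)" by (cases p) auto
    show "p \<in> PP k n \<longleftrightarrow> p \<in> fK ` AK \<union> fS ` AS"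
    proof (cases t)
      case None
      have "p \<in> fS ` AS \<longleftrightarrow> False" unfolding fS_def p None by auto
      moreover have "p \<in> fK ` AK \<longleftrightarrow> (I, c) \<in> AK" unfolding fK_def p None by force
      ultimately show ?thesis unfolding p None PP_def AK_def valid_def by (auto simp: PiE_iff)
    next
      case (Some j)
      have "p \<in> fK ` AK \<longleftrightarrow> False" unfolding fK_def p Some by auto
      moreover have "p \<in> fS ` AS \<longleftrightarrow> (j, I, c) \<in> AS" unfolding fS_def p Some by force
      ultimately show ?thesis unfolding p Some PP_def AS_def valid_def by (auto simp: PiE_iff)
    qed
  qed
  have finPow: "finite {I. I \<subseteq> {0..<k} \<and> even (card I)}"
    by (rule finite_subset[of _ "Pow {0..<k}"]) auto
  have finsub: "I \<subseteq> {0..<k} \<Longrightarrow> finite I" for I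
    using finite_subset[OF _ finite_atLeastLessThan] by blast
  have finI: "I \<in> {I. I \<subseteq> {0..<k} \<and> even (card I)} \<Longrightarrow> finite I" for I
    using finsub by blast
  have finPi: "finite I \<Longrightarrow> finite (PiE I (\<lambda>i. {..<n i}))" for I
    by (rule finite_PiE) auto
  have cAK: "card AK = (\<Sum>I \<in> {I. I \<subseteq> {0..<k} \<and> even (card I)}. \<Prod>i\<in>I. n i)"
  proof -
    have "card AK = (\<Sum>I \<in> {I. I \<subseteq> {0..<k} \<and> even (card I)}. card (PiE I (\<lambda>i. {..<n i})))"
      unfolding AK_def by (rule card_SigmaI[OF finPow], intro ballI finPi finI, assumption)
    also have "\<dots> = (\<Sum>I \<in> {I. I \<subseteq> {0..<k} \<and> even (card I)}. \<Prod>i\<in>I. n i)"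
    proof (rule sum.cong[OF refl])
      fix I assume "I \<in> {I. I \<subseteq> {0..<k} \<and> even (card I)}"
      then have "finite I" by (rule finI)
      then show "card (PiE I (\<lambda>i. {..<n i})) = (\<Prod>i\<in>I. n i)" by (simp add: card_PiE)
    qed
    finally show ?thesis .
  qed
  have cAS: "card AS = (\<Sum>j<k. \<Prod>i \<in> {0..<k} - {j}. n i + 1)"
  proof -
    have "card AS = (\<Sum>j<k. card (SIGMA I:Pow ({0..<k} - {j}). PiE I (\<lambda>i. {..<n i})))"
      unfolding AS_def
    proof (rule card_SigmaI)
      show "finite {..<k}" by simp
      show "\<forall>j\<in>{..<k}. finite (SIGMA I:Pow ({0..<k} - {j}). PiE I (\<lambda>i. {..<n i}))"
      proof
        fix j
        have "finite (Pow ({0..<k} - {j}))" by simp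
        moreover have "\<And>I. I \<in> Pow ({0..<k} - {j}) \<Longrightarrow> finite (PiE I (\<lambda>i. {..<n i}))"
          by (intro finPi finsub) auto
        ultimately show "finite (SIGMA I:Pow ({0..<k} - {j}). PiE I (\<lambda>i. {..<n i}))"
          by (rule finite_SigmaI)
      qed
    qed
    also have "\<dots> = (\<Sum>j<k. \<Sum>I\<in>Pow ({0..<k} - {j}). \<Prod>i\<in>I. n i)"
    proof (rule sum.cong[OF refl])
      fix j
      show "card (SIGMA I:Pow ({0..<k} - {j}). PiE I (\<lambda>i. {..<n i})) = (\<Sum>I\<in>Pow ({0..<k} - {j}). \<Prod>i\<in>I. n i)"
      proof -
        have "card (SIGMA I:Pow ({0..<k} - {j}). PiE I (\<lambda>i. {..<n i}))
            = (\<Sum>I\<in>Pow ({0..<k} - {j}). card (PiE I (\<lambda>i. {..<n i})))"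
          by (rule card_SigmaI) (simp, intro ballI finPi finsub, auto)
        also have "\<dots> = (\<Sum>I\<in>Pow ({0..<k} - {j}). \<Prod>i\<in>I. n i)"
        proof (rule sum.cong[OF refl])
          fix I assume "I \<in> Pow ({0..<k} - {j})"
          then have "finite I" by (intro finsub) auto
          then show "card (PiE I (\<lambda>i. {..<n i})) = (\<Prod>i\<in>I. n i)" by (simp add: card_PiE)
        qed
        finally show ?thesis .
      qed
    qed
    also have "\<dots> = (\<Sum>j<k. \<Prod>i \<in> {0..<k} - {j}. n i + 1)"
      by (rule sum.cong[OF refl]) (rule sum_pow_prod, simp)
    finally show ?thesis .
  qed
  have finAK: "finite AK" unfolding AK_def by (rule finite_SigmaI[OF finPow], rule finPi, rule finI, assumption)
  have finAS: "finite AS" unfolding AS_def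
  proof (rule finite_SigmaI)
    fix j
    show "finite (SIGMA I:Pow ({0..<k} - {j}). PiE I (\<lambda>i. {..<n i}))"
      by (rule finite_SigmaI) (simp, intro finPi finsub, auto)
  qed simp
  have "card (PP k n) = card (fK ` AK) + card (fS ` AS)"
    unfolding PPeq by (rule card_Un_disjoint) (auto simp: finAK finAS fK_def fS_def)
  also have "card (fK ` AK) = card AK"
    by (rule card_image) (auto simp: inj_on_def fK_def)
  also have "card (fS ` AS) = card AS"
    by (rule card_image) (auto simp: inj_on_def fS_def)
  finally show ?thesis using cAK cAS by simp
qed


theorem theorem7:
  fixes k :: nat and n :: "nat \<Rightarrow> nat"
  assumes "k \<ge> 3" and "\<And>i. i < k \<Longrightarrow> n i \<ge> 2"
  shows "card (lc_orbit (mp_vertices k n) (complete_multipartite k n)) =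
     (\<Sum>I \<in> {I. I \<subseteq> {0..<k} \<and> even (card I)}. \<Prod>i\<in>I. n i)
     + (\<Sum>j<k. \<Prod>i \<in> {0..<k} - {j}. n i + 1)"
proof -
  have "inj_on (\<lambda>(t, I, c). GP k n t I c) (PP k n)"
  proof (rule inj_onI)
    fix p q assume "p \<in> PP k n" "q \<in> PP k n" "(\<lambda>(t, I, c). GP k n t I c) p = (\<lambda>(t, I, c). GP k n t I c) q"
    then show "p = q"
    proof (cases p, cases q)
      fix t I c t' I' c'
      assume pq: "p \<in> PP k n" "q \<in> PP k n" "(\<lambda>(t, I, c). GP k n t I c) p = (\<lambda>(t, I, c). GP k n t I c) q"
        and p: "p = (t, I, c)" and q: "q = (t', I', c')"
      have "valid k n t I c" "c \<in> extensional I" "valid k n t' I' c'" "c' \<in> extensional I'"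
        "GP k n t I c = GP k n t' I' c'"
        using pq unfolding p q PP_def by auto
      from inj_param[where k=k and n=n, OF assms(1) assms(2) this(1,3,2,4,5)] show "p = q"
        unfolding p q by simp
    qed
  qed
  then have "card ((\<lambda>(t, I, c). GP k n t I c) ` PP k n) = card (PP k n)" by (rule card_image)
  then show ?thesis using orbit_eq[OF assms(2)] card_PP by simp
qed


end
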